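(* Let $A$ be the matrix described in the context. Diffusion occurs from a small seed if and only if the largest eigenvalue $\mu$ of $A$ (its Perron root) satisfies $\mu>1$.
   Context: There are $m\ge1$ types. $\Pi=(\pi_{ij})$ is a nonnegative row-stochastic $m\times m$ matrix ($\pi_{ij}$ is the probability that a meeting of a type-$i$ agent is with a type-$j$ agent) which is primitive (some power has all entries strictly positive). For each type $i$: $P_i$ is a degree distribution on the nonnegative integers; $w_i(d)>0$ are degree weights for $d$ with $P_i(d)>0$; $f_i(d,a)$, $g_i(d,a)$ ($0\le a\le d$) are the adoption and abandonment rates of a type-$i$, degree-$d$ agent meeting $a$ adopters, satisfying: $f_i(d,0)=0$; $f_i(d,a)$ nondecreasing in $a$; $f_i(d,1)>0$ for some $d$ with $P_i(d)>0$; $g_i(d,0)>0$; $g_i(d,a)$ nonincreasing in $a$. Let $x_i=\sum_dP_i(d)w_i(d)\,d\,\frac{f_i(d,1)}{g_i(d,0)}$, assumed finite; it is positive. $A$ is the $m\times m$ matrix with $A_{ij}=\pi_{ij}x_j$ (the linearization at zero of the steady-state map for the probabilities of meeting an adopter). Diffusion occurs from a small seed means: for every $\varepsilon>0$ there exists $v\in\mathbb{R}^m$ with $0<v_i<\varepsilon$ and $(Av)_i>v_i$ for all $i$. *)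

theory Defs
  imports "HOL-Analysis.Analysis"
begin

primrec matpow :: "real^'n^'n \<Rightarrow> nat \<Rightarrow> real^'n^'n" where
  "matpow M 0 = mat 1"
| "matpow M (Suc k) = M ** matpow M k"

definition primitive_matrix :: "real^'n^'n \<Rightarrow> bool" where
  "primitive_matrix M \<longleftrightarrow> (\<forall>i j. M $ i $ j \<ge> 0) \<and> (\<exists>k. \<forall>i j. matpow M k $ i $ j > 0)"

definition complex_eigenvalue :: "real^'n^'n \<Rightarrow> complex \<Rightarrow> bool" where
  "complex_eigenvalue M l \<longleftrightarrow>
     (\<exists>z::complex^'n. z \<noteq> 0 \<and> (\<chi> i j. complex_of_real (M $ i $ j)) *v z = l *s z)"

text \<open>The Perron root of a nonnegative matrix: its spectral radius, i.e. the largest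
  modulus of a (complex) eigenvalue; for a nonnegative primitive matrix this is the
  largest eigenvalue, which is real and positive.\<close>
definition perron_root :: "real^'n^'n \<Rightarrow> real" where
  "perron_root M = Max (cmod ` {l. complex_eigenvalue M l})"

definition xval :: "(nat \<Rightarrow> real) \<Rightarrow> (nat \<Rightarrow> real) \<Rightarrow> (nat \<Rightarrow> nat \<Rightarrow> real) \<Rightarrow> (nat \<Rightarrow> nat \<Rightarrow> real) \<Rightarrow> real" where
  "xval P w f g = (\<Sum>d. P d * w d * real d * f d 1 / g d 0)"

definition diffusion_small_seed :: "real^'n^'n \<Rightarrow> bool" where
  "diffusion_small_seed M \<longleftrightarrow>
     (\<forall>\<epsilon>>0. \<exists>v::real^'n. (\<forall>i. 0 < v $ i \<and> v $ i < \<epsilon>) \<and> (\<forall>i. (M *v v) $ i > v $ i))"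

end

theory Submission imports Defs begin



lemma mm_comp: "((M::real^'n^'n) ** N) $ i $ j = (\<Sum>l\<in>UNIV. M$i$l * N$l$j)"
  by (simp add: matrix_matrix_mult_def)

lemma mv_comp: "((M::'a::semiring_1^'n^'m) *v x) $ i = (\<Sum>j\<in>UNIV. M$i$j * x$j)"
  by (simp add: matrix_vector_mult_def)

lemma matpow_Suc_right: "matpow M (Suc k) = matpow M k ** M"
proof (induction k)
  case 0 then show ?case by (simp add: matrix_mul_lid matrix_mul_rid)
next
  case (Suc k)
  have "matpow M (Suc (Suc k)) = M ** (matpow M k ** M)" using Suc by simp
  also have "\<dots> = matpow M (Suc k) ** M" by (simp add: matrix_mul_assoc)
  finally show ?case .
qed

lemma matpow_transpose: "matpow (transpose M) k = transpose (matpow M k)"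
proof (induction k)
  case 0 then show ?case by (simp add: transpose_mat)
next
  case (Suc k)
  have "matpow (transpose M) (Suc k) = transpose M ** transpose (matpow M k)" using Suc by simp
  also have "\<dots> = transpose (matpow M k ** M)" by (simp add: matrix_transpose_mul)
  also have "\<dots> = transpose (matpow M (Suc k))" by (metis matpow.simps(2) matpow_Suc_right)
  finally show ?case .
qed

lemma matpow_nonneg: "\<forall>i j. (M::real^'n^'n)$i$j \<ge> 0 \<Longrightarrow> matpow M k $ i $ j \<ge> 0"
proof (induction k arbitrary: i j)
  case 0 then show ?case by (simp add: mat_def)
next
  case (Suc k) then show ?case by (simp add: mm_comp sum_nonneg)
qed

lemma matpow_compare:
  fixes M N :: "real^'n^'n"
  assumes "\<forall>i j. M$i$j \<ge> 0" "c \<ge> 0" "\<forall>i j. c * M$i$j \<le> N$i$j"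
  shows "c^k * matpow M k $ i $ j \<le> matpow N k $ i $ j"
proof (induction k arbitrary: i j)
  case 0 then show ?case by (simp add: mat_def)
next
  case (Suc k)
  have "c^Suc k * matpow M (Suc k) $ i $ j = (\<Sum>l\<in>UNIV. (c * M$i$l) * (c^k * matpow M k $l$j))"
    by (simp add: mm_comp sum_distrib_left algebra_simps)
  also have "\<dots> \<le> (\<Sum>l\<in>UNIV. N$i$l * matpow N k $l$j)"
  proof (rule sum_mono)
    fix l
    have "0 \<le> c * M$i$l" using assms by simp
    moreover have "0 \<le> c^k * matpow M k $l$j" using assms matpow_nonneg[of M] by simp
    moreover have "0 \<le> N$i$l" using assms(3) \<open>0 \<le> c * M$i$l\<close> by (meson order_trans)
    ultimately show "(c * M$i$l) * (c^k * matpow M k $l$j) \<le> N$i$l * matpow N k $l$j"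
      by (intro mult_mono) (simp_all add: assms(3) Suc.IH)
  qed
  also have "\<dots> = matpow N (Suc k) $ i $ j" by (simp add: mm_comp)
  finally show ?case .
qed

lemma matpow_eig: "(M::real^'n^'n) *v x = s *\<^sub>R x \<Longrightarrow> matpow M k *v x = (s^k) *\<^sub>R x"
proof (induction k)
  case 0 then show ?case by simp
next
  case (Suc k)
  have "matpow M (Suc k) *v x = M *v (matpow M k *v x)" by (simp add: matrix_vector_mul_assoc)
  also have "\<dots> = M *v ((s^k) *\<^sub>R x)" using Suc by simp
  also have "\<dots> = (s^k) *\<^sub>R (M *v x)" by (simp add: vec.scale flip: scalar_mult_eq_scaleR)
  also have "\<dots> = (s^Suc k) *\<^sub>R x" using Suc by simp
  finally show ?case .
qed


lemma perron_vec:
  fixes B :: "real^'n^'n"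
  assumes nn: "\<forall>i j. B$i$j \<ge> 0" and pos: "\<forall>i j. matpow B (Suc k) $ i $ j > 0"
  shows "\<exists>x s. (\<forall>i. x$i > 0) \<and> s > 0 \<and> B *v x = s *\<^sub>R x"
proof -
  define S where "S = {x::real^'n. (\<forall>i. 0 \<le> x$i) \<and> (\<Sum>i\<in>UNIV. x$i) = 1}"
  define cs where "cs j = (\<Sum>i\<in>UNIV. B$i$j)" for j
  have cs_pos: "cs j > 0" for j
  proof -
    obtain i :: 'n where True by simp
    have "0 < matpow B (Suc k) $ i $ j" using pos by simp
    also have "\<dots> = (\<Sum>l\<in>UNIV. matpow B k $i$l * B$l$j)" by (simp only: matpow_Suc_right mm_comp)
    finally have pp: "0 < (\<Sum>l\<in>UNIV. matpow B k $i$l * B$l$j)" .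
    have "\<exists>l. matpow B k $i$l * B$l$j \<noteq> 0"
    proof (rule ccontr)
      assume "\<not> ?thesis"
      then have "(\<Sum>l\<in>UNIV. matpow B k $i$l * B$l$j) = 0" by (intro sum.neutral) blast
      then show False using pp by simp
    qed
    then obtain l where "matpow B k $i$l * B$l$j \<noteq> 0" by blast
    then have "B$l$j \<noteq> 0" by auto
    moreover have "B$l$j \<ge> 0" using nn by blast
    ultimately have "B$l$j > 0" by linarith
    then show ?thesis unfolding cs_def using nn
      by (meson UNIV_I finite sum_pos2)
  qed
  have den: "(\<Sum>i\<in>UNIV. (B *v x)$i) = (\<Sum>j\<in>UNIV. cs j * x$j)" for x
  proof -
    have "(\<Sum>i\<in>UNIV. (B *v x)$i) = (\<Sum>i\<in>UNIV. \<Sum>j\<in>UNIV. B$i$j * x$j)" by (simp add: mv_comp)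
    also have "\<dots> = (\<Sum>j\<in>UNIV. \<Sum>i\<in>UNIV. B$i$j * x$j)" by (rule sum.swap)
    also have "\<dots> = (\<Sum>j\<in>UNIV. cs j * x$j)" by (simp add: cs_def sum_distrib_right)
    finally show ?thesis .
  qed
  have denpos: "(\<Sum>i\<in>UNIV. (B *v x)$i) > 0" if "x \<in> S" for x
  proof -
    have "\<exists>j. x$j > 0"
    proof (rule ccontr)
      assume "\<not> ?thesis"
      then have "\<forall>j. x$j = 0" using that unfolding S_def by (simp add: not_less order_antisym)
      then show False using that unfolding S_def by simp
    qed
    then obtain j where "x$j > 0" by blast
    then have "cs j * x$j > 0" using cs_pos by simp
    then show ?thesis unfolding den using that cs_pos unfolding S_def
      by (intro sum_pos2[where i=j]) (auto intro: mult_nonneg_nonneg less_imp_le)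
  qed
  define F where "F x = (1 / (\<Sum>i\<in>UNIV. (B *v x)$i)) *\<^sub>R (B *v x)" for x
  have "compact S"
  proof (subst compact_eq_bounded_closed, intro conjI)
    have "norm x \<le> CARD('n)" if "x \<in> S" for x
    proof -
      have "norm x \<le> (\<Sum>i\<in>UNIV. \<bar>x$i\<bar>)" by (rule norm_le_l1_cart)
      also have "\<dots> = 1" using that unfolding S_def by simp
      finally have "norm x \<le> 1" .
      moreover have "(1::real) \<le> real CARD('n)"
        using zero_less_card_finite[where 'a='n] by linarith
      ultimately show ?thesis by linarith
    qed
    then show "bounded S" unfolding bounded_iff by blast
    have "S = (\<Inter>i. {x. 0 \<le> x$i}) \<inter> {x. (\<Sum>i\<in>UNIV. x$i) = 1}" unfolding S_def by auto
    moreover have "closed {x::real^'n. (\<Sum>i\<in>UNIV. x$i) = 1}"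
      by (intro closed_Collect_eq continuous_intros)
    moreover have "closed {x::real^'n. 0 \<le> x$i}" for i
      by (intro closed_Collect_le continuous_intros)
    ultimately show "closed S" by (metis closed_INT closed_Int)
  qed
  moreover have "convex S"
    unfolding convex_def S_def
    by (auto simp: sum.distrib sum_distrib_left[symmetric])
  moreover have "S \<noteq> {}"
  proof -
    have "(\<chi> i. 1 / real CARD('n)) \<in> S" unfolding S_def by simp
    then show ?thesis by blast
  qed
  moreover have "continuous_on S F"
  proof -
    have c1: "continuous_on S (\<lambda>x. B *v x)"
      by (intro linear_continuous_on linear_conv_bounded_linear[THEN iffD1] matrix_vector_mul_linear)
    have c2: "continuous_on S (\<lambda>x. (\<Sum>i\<in>UNIV. (B *v x)$i))"
      by (intro continuous_intros c1)
    show ?thesis unfolding F_def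
      using denpos by (intro continuous_intros c1 c2) (metis less_irrefl)
  qed
  moreover have "F \<in> S \<rightarrow> S"
  proof
    fix x assume xS: "x \<in> S"
    have d: "(\<Sum>i\<in>UNIV. (B *v x)$i) > 0" using denpos xS by blast
    have "(B *v x)$i \<ge> 0" for i using nn xS unfolding S_def by (simp add: mv_comp sum_nonneg)
    then show "F x \<in> S" unfolding S_def F_def using d
      by (simp add: sum_divide_distrib[symmetric])
  qed
  ultimately obtain x where xS: "x \<in> S" and fx: "F x = x" by (rule brouwer)
  define s where "s = (\<Sum>i\<in>UNIV. (B *v x)$i)"
  have s: "s > 0" using denpos xS s_def by blast
  have eig: "B *v x = s *\<^sub>R x"
  proof -
    have "x = (1/s) *\<^sub>R (B *v x)" using fx unfolding F_def s_def by simp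
    then have "s *\<^sub>R x = s *\<^sub>R ((1/s) *\<^sub>R (B *v x))" by simp
    also have "\<dots> = B *v x" using s by simp
    finally show ?thesis by simp
  qed
  have xpos: "x$i > 0" for i
  proof -
    have "\<exists>j. x$j > 0"
    proof (rule ccontr)
      assume "\<not> ?thesis"
      then have "\<forall>j. x$j = 0" using xS unfolding S_def by (simp add: not_less order_antisym)
      then show False using xS unfolding S_def by simp
    qed
    then obtain j where xj: "x$j > 0" by blast
    have "(matpow B (Suc k) *v x)$i > 0" unfolding mv_comp
      using xS pos xj unfolding S_def
      by (intro sum_pos2[where i=j]) (auto intro: mult_nonneg_nonneg less_imp_le)
    also have "matpow B (Suc k) *v x = (s^Suc k) *\<^sub>R x" by (rule matpow_eig[OF eig])
    finally show ?thesis using s by (simp add: zero_less_mult_iff) (metis not_less_iff_gr_or_eq mult_pos_pos zero_less_power)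
  qed
  show ?thesis using xpos s eig by blast
qed


lemma eig_indep:
  fixes C :: "complex^'n^'n" and e :: "complex \<Rightarrow> complex^'n"
  assumes fin: "finite L" and ev: "\<forall>l\<in>L. e l \<noteq> 0 \<and> C *v e l = l *s e l"
  shows "(\<Sum>l\<in>L. c l *s e l) = 0 \<Longrightarrow> \<forall>l\<in>L. c l = 0"
  using fin ev
proof (induction L arbitrary: c rule: finite_induct)
  case empty then show ?case by simp
next
  case (insert a F)
  have s0: "c a *s e a + (\<Sum>l\<in>F. c l *s e l) = 0" using insert by (simp add: sum.insert)
  have "C *v (c a *s e a + (\<Sum>l\<in>F. c l *s e l)) = 0" using s0 by simp
  then have s1: "(c a * a) *s e a + (\<Sum>l\<in>F. (c l * l) *s e l) = 0"
    using insert.prems by (simp add: vec.add vec.sum vec.scale vector_smult_assoc mult.commute)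
  have "(\<Sum>l\<in>F. (c l * (l - a)) *s e l) =
        ((c a * a) *s e a + (\<Sum>l\<in>F. (c l * l) *s e l)) - a *s (c a *s e a + (\<Sum>l\<in>F. c l *s e l))"
    by (simp add: algebra_simps vector_ssub_ldistrib vector_sadd_rdistrib vec.scale_sum_right
        sum_subtractf vector_smult_assoc vector_sub_rdistrib vector_add_ldistrib)
  also have "\<dots> = 0" using s0 s1 by simp
  finally have "\<forall>l\<in>F. c l * (l - a) = 0" using insert.IH[of "\<lambda>l. c l * (l - a)"] insert.prems by blast
  then have cF: "\<forall>l\<in>F. c l = 0" using insert.hyps by auto
  then have "c a *s e a = 0" using s0 by simp
  then have "c a = 0" using insert.prems by (simp add: vec.scale_eq_0_iff)
  then show ?case using cF by simp
qed

lemma eig_card: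
  fixes M :: "real^'n^'n"
  assumes fin: "finite L" and sub: "L \<subseteq> {l. complex_eigenvalue M l}"
  shows "card L \<le> CARD('n)"
proof -
  define C where "C = (\<chi> i j. complex_of_real (M $ i $ j))"
  define e where "e l = (SOME z. z \<noteq> 0 \<and> C *v z = l *s z)" for l
  have ev: "\<forall>l\<in>L. e l \<noteq> 0 \<and> C *v e l = l *s e l"
  proof
    fix l assume "l \<in> L"
    then have "\<exists>z. z \<noteq> 0 \<and> C *v z = l *s z" using sub unfolding complex_eigenvalue_def C_def by auto
    then show "e l \<noteq> 0 \<and> C *v e l = l *s e l" unfolding e_def by (rule someI_ex)
  qed
  have inj: "inj_on e L"
  proof
    fix a b assume ab: "a \<in> L" "b \<in> L" "e a = e b"
    then have "a *s e a = b *s e a" using ev by metis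
    then have "(a - b) *s e a = 0" by (simp add: vector_sub_rdistrib)
    then show "a = b" using ev ab by (simp add: vec.scale_eq_0_iff)
  qed
  have "vec.independent (e ` L)"
  proof (rule vec.independent_if_scalars_zero)
    show "finite (e ` L)" using fin by simp
    fix g v assume s: "(\<Sum>x\<in>e ` L. g x *s x) = 0" and v: "v \<in> e ` L"
    have "(\<Sum>l\<in>L. g (e l) *s e l) = 0" using s by (simp add: sum.reindex[OF inj])
    then have "\<forall>l\<in>L. g (e l) = 0" by (rule eig_indep[OF fin ev])
    then show "g v = 0" using v by auto
  qed
  then have "card (e ` L) \<le> vec.dim (e ` L)" using vec.independent_bound_general by blast
  also have "\<dots> \<le> CARD('n)" by (rule dim_subset_UNIV_cart_gen)
  finally show ?thesis using card_image[OF inj] by simp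
qed

lemma eig_finite: "finite {l. complex_eigenvalue (M::real^'n^'n) l}"
proof (rule ccontr)
  assume "infinite {l. complex_eigenvalue M l}"
  then obtain L where "L \<subseteq> {l. complex_eigenvalue M l}" "finite L" "card L = Suc (CARD('n))"
    using infinite_arbitrarily_large by blast
  then show False using eig_card[of L M] by simp
qed



theorem theorem3:
  fixes Pi :: "real^'m^'m"
    and P :: "'m \<Rightarrow> nat \<Rightarrow> real"
    and w :: "'m \<Rightarrow> nat \<Rightarrow> real"
    and f g :: "'m \<Rightarrow> nat \<Rightarrow> nat \<Rightarrow> real"
    and A :: "real^'m^'m"
  assumes Pi_nonneg: "\<forall>i j. Pi $ i $ j \<ge> 0"
    and Pi_stoch: "\<forall>i. (\<Sum>j\<in>UNIV. Pi $ i $ j) = 1"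
    and Pi_prim: "primitive_matrix Pi"
    and P_nonneg: "\<forall>i d. P i d \<ge> 0"
    and P_dist: "\<forall>i. P i sums 1"
    and w_pos: "\<forall>i d. P i d > 0 \<longrightarrow> w i d > 0"
    and f_nonneg: "\<forall>i d a. a \<le> d \<longrightarrow> f i d a \<ge> 0"
    and g_nonneg: "\<forall>i d a. a \<le> d \<longrightarrow> g i d a \<ge> 0"
    and f_zero: "\<forall>i d. f i d 0 = 0"
    and f_mono: "\<forall>i d a b. a \<le> b \<longrightarrow> b \<le> d \<longrightarrow> f i d a \<le> f i d b"
    and f_one: "\<forall>i. \<exists>d. P i d > 0 \<and> 1 \<le> d \<and> f i d 1 > 0"
    and g_zero: "\<forall>i d. g i d 0 > 0"
    and g_mono: "\<forall>i d a b. a \<le> b \<longrightarrow> b \<le> d \<longrightarrow> g i d b \<le> g i d a"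
    and x_fin: "\<forall>i. summable (\<lambda>d. P i d * w i d * real d * f i d 1 / g i d 0)"
    and A_def: "A = (\<chi> i j. Pi $ i $ j * xval (P j) (w j) (f j) (g j))"
  shows "diffusion_small_seed A \<longleftrightarrow> perron_root A > 1"
  proof -
  define xv where "xv j = xval (P j) (w j) (f j) (g j)" for j
  have xv_pos: "xv j > 0" for j
  proof -
    have nn: "0 \<le> P j d * w j d * real d * f j d 1 / g j d 0" for d
    proof (cases "P j d > 0")
      case True
      show ?thesis
      proof (cases "d = 0")
        case False
        then have "f j d 1 \<ge> 0" using f_nonneg by simp
        moreover have "w j d > 0" using w_pos True by simp
        ultimately show ?thesis using True g_zero[rule_format, of j d]
          by (intro divide_nonneg_pos mult_nonneg_nonneg) auto
      qed simp
    next
      case False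
      then have "P j d = 0" using P_nonneg by (simp add: not_less order_antisym)
      then show ?thesis by simp
    qed
    obtain d where d: "P j d > 0" "1 \<le> d" "f j d 1 > 0" using f_one by blast
    have "0 < P j d * w j d * real d * f j d 1 / g j d 0"
      using d w_pos g_zero by (intro divide_pos_pos mult_pos_pos) auto
    then show ?thesis unfolding xv_def xval_def using x_fin nn
      by (intro suminf_pos2[where i=d]) auto
  qed
  have A_ij: "A $ i $ j = Pi $ i $ j * xv j" for i j by (simp add: A_def xv_def)
  have A_nn: "\<forall>i j. A $ i $ j \<ge> 0" using Pi_nonneg xv_pos by (simp add: A_ij less_imp_le)
  define \<delta> where "\<delta> = Min (range xv)"
  have \<delta>_pos: "\<delta> > 0" unfolding \<delta>_def using xv_pos by (subst Min_gr_iff) auto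
  have \<delta>_le: "\<delta> * Pi $ i $ j \<le> A $ i $ j" for i j
  proof -
    have "\<delta> \<le> xv j" unfolding \<delta>_def by (rule Min_le) auto
    then have "\<delta> * Pi $ i $ j \<le> xv j * Pi $ i $ j" using Pi_nonneg by (simp add: mult_right_mono)
    then show ?thesis by (simp add: A_ij mult.commute)
  qed
  obtain k where k: "\<forall>i j. matpow Pi k $ i $ j > 0" using Pi_prim unfolding primitive_matrix_def by blast
  have PiS: "matpow Pi (Suc k) $ i $ j > 0" for i j
  proof -
    have "\<exists>l. Pi $ i $ l > 0"
    proof (rule ccontr)
      assume "\<not> ?thesis"
      then have "\<forall>l. Pi $ i $ l = 0" using Pi_nonneg by (simp add: not_less order_antisym)
      then have "(\<Sum>j\<in>UNIV. Pi $ i $ j) = 0" by simp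
      then show False using Pi_stoch by simp
    qed
    then obtain l where l: "Pi $ i $ l > 0" by blast
    show ?thesis unfolding matpow.simps mm_comp using l k Pi_nonneg
      by (intro sum_pos2[where i=l]) (auto intro!: mult_nonneg_nonneg simp: less_imp_le)
  qed
  have AS: "matpow A (Suc k) $ i $ j > 0" for i j
  proof -
    have "0 < \<delta>^Suc k * matpow Pi (Suc k) $ i $ j" using \<delta>_pos PiS by simp
    also have "\<dots> \<le> matpow A (Suc k) $ i $ j"
      using Pi_nonneg \<delta>_pos \<delta>_le by (intro matpow_compare) (auto intro: less_imp_le)
    finally show ?thesis .
  qed
  have AtS: "matpow (transpose A) (Suc k) $ i $ j > 0" for i j
    using AS[of j i] by (simp only: matpow_transpose) (simp add: transpose_def)
  have At_nn: "\<forall>i j. transpose A $ i $ j \<ge> 0" using A_nn by (simp add: transpose_def)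
  have "\<exists>x s. (\<forall>i. x$i > 0) \<and> s > 0 \<and> A *v x = s *\<^sub>R x"
    by (rule perron_vec[OF A_nn, of k]) (use AS in blast)
  then obtain x lam where x: "\<forall>i. x$i > 0" and lam: "lam > 0" and Ax: "A *v x = lam *\<^sub>R x"
    by blast
  have "\<exists>x s. (\<forall>i. x$i > 0) \<and> s > 0 \<and> transpose A *v x = s *\<^sub>R x"
    by (rule perron_vec[OF At_nn, of k]) (use AtS in blast)
  then obtain y mu where y: "\<forall>i. y$i > 0" and Aty: "transpose A *v y = mu *\<^sub>R y"
    by blast
  have Ax_i: "(\<Sum>j\<in>UNIV. A$i$j * x$j) = lam * x$i" for i
    using arg_cong[OF Ax, of "\<lambda>v. v $ i"] by (simp add: mv_comp)
  have yA_j: "(\<Sum>i\<in>UNIV. y$i * A$i$j) = mu * y$j" for j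
    using arg_cong[OF Aty, of "\<lambda>v. v $ j"] by (simp add: mv_comp transpose_def mult.commute)
  have swap: "(\<Sum>i\<in>UNIV. y$i * (\<Sum>j\<in>UNIV. A$i$j * v j)) = (\<Sum>j\<in>UNIV. mu * y$j * v j)" for v
  proof -
    have "(\<Sum>i\<in>UNIV. y$i * (\<Sum>j\<in>UNIV. A$i$j * v j)) = (\<Sum>i\<in>UNIV. \<Sum>j\<in>UNIV. y$i * A$i$j * v j)"
      by (simp add: sum_distrib_left mult.assoc)
    also have "\<dots> = (\<Sum>j\<in>UNIV. \<Sum>i\<in>UNIV. y$i * A$i$j * v j)" by (rule sum.swap)
    also have "\<dots> = (\<Sum>j\<in>UNIV. (\<Sum>i\<in>UNIV. y$i * A$i$j) * v j)" by (simp add: sum_distrib_right)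
    also have "\<dots> = (\<Sum>j\<in>UNIV. mu * y$j * v j)" by (simp add: yA_j)
    finally show ?thesis .
  qed
  have yx_pos: "(\<Sum>i\<in>UNIV. y$i * x$i) > 0"
    using x y by (intro sum_pos2[where i=undefined]) (auto intro!: mult_nonneg_nonneg mult_pos_pos simp: less_imp_le)
  have lam_eq: "mu = lam"
  proof -
    have "mu * (\<Sum>i\<in>UNIV. y$i * x$i) = (\<Sum>j\<in>UNIV. mu * y$j * x$j)"
      by (simp add: sum_distrib_left mult.assoc)
    also have "\<dots> = (\<Sum>i\<in>UNIV. y$i * (\<Sum>j\<in>UNIV. A$i$j * x$j))"
      by (rule swap[of "\<lambda>j. x$j", symmetric])
    also have "\<dots> = (\<Sum>i\<in>UNIV. lam * (y$i * x$i))"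
      by (simp only: Ax_i mult.left_commute)
    also have "\<dots> = lam * (\<Sum>i\<in>UNIV. y$i * x$i)"
      by (simp only: sum_distrib_left)
    finally show ?thesis using yx_pos by simp
  qed
  have bound: "cmod l \<le> lam" if "complex_eigenvalue A l" for l
  proof -
    have "\<exists>z::complex^'m. z \<noteq> 0 \<and> (\<chi> i j. complex_of_real (A $ i $ j)) *v z = l *s z"
      using that unfolding complex_eigenvalue_def .
    then obtain z :: "complex^'m" where z0: "z \<noteq> 0"
      and zeq: "(\<chi> i j. complex_of_real (A $ i $ j)) *v z = l *s z"
      by (elim exE conjE)
    have comp: "l * z$i = (\<Sum>j\<in>UNIV. complex_of_real (A$i$j) * z$j)" for i
      using arg_cong[OF zeq, of "\<lambda>v. v $ i"] by (simp add: mv_comp)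
    have ineq: "cmod l * cmod (z$i) \<le> (\<Sum>j\<in>UNIV. A$i$j * cmod (z$j))" for i
    proof -
      have "cmod l * cmod (z$i) = cmod (\<Sum>j\<in>UNIV. complex_of_real (A$i$j) * z$j)"
        by (simp add: comp[symmetric] norm_mult)
      also have "\<dots> \<le> (\<Sum>j\<in>UNIV. cmod (complex_of_real (A$i$j) * z$j))" by (rule norm_sum)
      also have "\<dots> = (\<Sum>j\<in>UNIV. A$i$j * cmod (z$j))"
        using A_nn by (simp add: norm_mult)
      finally show ?thesis .
    qed
    have "(\<Sum>i\<in>UNIV. y$i * (cmod l * cmod (z$i))) \<le> (\<Sum>i\<in>UNIV. y$i * (\<Sum>j\<in>UNIV. A$i$j * cmod (z$j)))"
      using y ineq by (intro sum_mono mult_left_mono) (auto intro: less_imp_le)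
    also have "\<dots> = (\<Sum>j\<in>UNIV. mu * y$j * cmod (z$j))" by (rule swap)
    finally have "cmod l * (\<Sum>i\<in>UNIV. y$i * cmod (z$i)) \<le> lam * (\<Sum>i\<in>UNIV. y$i * cmod (z$i))"
      using lam_eq by (simp add: sum_distrib_left mult_ac)
    moreover have "(\<Sum>i\<in>UNIV. y$i * cmod (z$i)) > 0"
    proof -
      have "\<exists>i. z$i \<noteq> 0" using z0 by (simp add: vec_eq_iff)
      then obtain i where "z$i \<noteq> 0" by blast
      then show ?thesis using y by (intro sum_pos2[where i=i]) (auto intro!: mult_nonneg_nonneg mult_pos_pos simp: less_imp_le)
    qed
    ultimately show ?thesis by simp
  qed
  have lam_ev: "complex_eigenvalue A (complex_of_real lam)"
    unfolding complex_eigenvalue_def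
  proof (intro exI conjI)
    define z :: "complex^'m" where "z = (\<chi> i. complex_of_real (x$i))"
    show "z \<noteq> 0"
    proof
      assume "z = 0"
      then have "z $ undefined = 0" by simp
      then have "x $ undefined = 0" unfolding z_def by simp
      then show False using x[rule_format, of undefined] by simp
    qed
    show "(\<chi> i j. complex_of_real (A $ i $ j)) *v z = complex_of_real lam *s z"
      unfolding z_def vec_eq_iff
    proof
      fix i
      have "(\<Sum>j\<in>UNIV. complex_of_real (A$i$j) * complex_of_real (x$j)) = complex_of_real (\<Sum>j\<in>UNIV. A$i$j * x$j)"
        by simp
      also have "\<dots> = complex_of_real (lam * x$i)" by (simp add: Ax_i)
      finally show "((\<chi> i j. complex_of_real (A $ i $ j)) *v (\<chi> i. complex_of_real (x$i))) $ i =
          (complex_of_real lam *s (\<chi> i. complex_of_real (x$i))) $ i" by (simp add: mv_comp)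
    qed
  qed
  have pr: "perron_root A = lam"
    unfolding perron_root_def
  proof (rule Max_eqI)
    show "finite (cmod ` {l. complex_eigenvalue A l})" using eig_finite[of A] by (rule finite_imageI)
    show "u \<le> lam" if "u \<in> cmod ` {l. complex_eigenvalue A l}" for u using that bound by auto
    show "lam \<in> cmod ` {l. complex_eigenvalue A l}"
      using lam_ev lam by (intro image_eqI[where x="complex_of_real lam"]) auto
  qed
  show ?thesis unfolding pr
  proof
    assume "diffusion_small_seed A"
    then have "\<exists>v::real^'m. (\<forall>i. 0 < v $ i \<and> v $ i < 1) \<and> (\<forall>i. (A *v v) $ i > v $ i)"
      unfolding diffusion_small_seed_def by (drule_tac x=1 in spec) simp
    then obtain v :: "real^'m" where v: "\<forall>i. 0 < v$i" and Av: "\<forall>i. (A *v v)$i > v$i"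
      by blast
    have "(\<Sum>i\<in>UNIV. y$i * v$i) < (\<Sum>i\<in>UNIV. y$i * (\<Sum>j\<in>UNIV. A$i$j * v$j))"
      using y Av by (intro sum_strict_mono) (auto simp: mv_comp)
    also have "\<dots> = (\<Sum>j\<in>UNIV. mu * y$j * v$j)" by (rule swap)
    also have "\<dots> = lam * (\<Sum>i\<in>UNIV. y$i * v$i)" using lam_eq by (simp add: sum_distrib_left mult_ac)
    finally have "1 * (\<Sum>i\<in>UNIV. y$i * v$i) < lam * (\<Sum>i\<in>UNIV. y$i * v$i)" by simp
    moreover have "(\<Sum>i\<in>UNIV. y$i * v$i) > 0"
      using v y by (intro sum_pos2[where i=undefined]) (auto intro!: mult_nonneg_nonneg mult_pos_pos simp: less_imp_le)
    ultimately show "1 < lam" by (simp add: mult_less_cancel_right)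
  next
    assume l1: "1 < lam"
    show "diffusion_small_seed A" unfolding diffusion_small_seed_def
    proof (intro allI impI)
      fix \<epsilon> :: real assume e: "\<epsilon> > 0"
      define X where "X = (\<Sum>i\<in>UNIV. x$i)"
      have xle: "x$i \<le> X" for i unfolding X_def using x
        by (intro member_le_sum) (auto intro: less_imp_le)
      have X: "X > 0" using xle[of undefined] x[rule_format, of undefined] by linarith
      define t where "t = \<epsilon> / (2 * X)"
      have t: "t > 0" using e X unfolding t_def by simp
      define v where "v = t *\<^sub>R x"
      show "\<exists>v::real^'m. (\<forall>i. 0 < v $ i \<and> v $ i < \<epsilon>) \<and> (\<forall>i. v $ i < (A *v v) $ i)"
      proof (intro exI conjI allI)
        fix i
        show "0 < v$i" unfolding v_def using t x by simp
        have "v$i = t * x$i" unfolding v_def by simp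
        also have "\<dots> \<le> t * X" using t xle by (simp add: less_imp_le)
        also have "\<dots> = \<epsilon>/2" unfolding t_def using X by simp
        finally show "v$i < \<epsilon>" using e by simp
        have "A *v v = t *\<^sub>R (A *v x)" unfolding v_def by (simp add: vec.scale flip: scalar_mult_eq_scaleR)
        then have "(A *v v)$i = lam * v$i" unfolding v_def Ax by simp
        then show "v$i < (A *v v)$i" using l1 \<open>0 < v$i\<close> by simp
      qed
    qed
  qed
qed

end
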